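(* Let $L\in\{1,2\}$, ${\bf A}\in\mathbb R^{M\times N}$, ${\bf b}\in\mathbb R^M$, $\tilde\eta>0$, and let $(r,{\bf u})$ follow the weight-normalized gradient flow with $(\eta_r,\eta_{\bf u})=(\tilde\eta,1)$, $r_0>0$, ${\bf u}_0>0$. If all entries of ${\bf u}(t)$ are bounded away from zero uniformly in $t\ge0$, then $r(t)$ is bounded above uniformly in $t\ge0$.
   Context: Loss: $\mathcal L({\bf x})=\frac{1}{2L}\|{\bf A}{\bf x}^{\odot L}-{\bf b}\|_2^2$ ($\odot$ = entrywise power). Weight-normalized loss $\tilde{\mathcal L}(r,{\bf u})=\mathcal L\big(\frac{r}{\|{\bf u}\|_2}{\bf u}\big)$ for $r\in\mathbb R$, ${\bf u}\in\mathbb R^N\setminus\{0\}$. Weight-normalized gradient flow: $\partial_t r=-\eta_r\nabla_r\tilde{\mathcal L}(r,{\bf u})$, $\partial_t{\bf u}=-\eta_{\bf u}\nabla_{\bf u}\tilde{\mathcal L}(r,{\bf u})$, $r(0)=r_0$, ${\bf u}(0)={\bf u}_0$. *)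

theory Defs
  imports "HOL-Analysis.Analysis"
begin

text \<open>Entrywise power x^{\<odot>L}.\<close>
definition epow :: "real ^ 'n \<Rightarrow> nat \<Rightarrow> real ^ 'n" where
  "epow x L = (\<chi> i. (x $ i) ^ L)"

text \<open>Loss L(x) = 1/(2L) * ||A x^{\<odot>L} - b||^2.\<close>
definition loss :: "real ^ 'n ^ 'm \<Rightarrow> real ^ 'm \<Rightarrow> nat \<Rightarrow> real ^ 'n \<Rightarrow> real" where
  "loss A b L x = (1 / (2 * real L)) * (norm (A *v epow x L - b))\<^sup>2"

text \<open>Weight-normalized loss Ltilde(r,u) = L((r/||u||) u).\<close>
definition wn_loss :: "real ^ 'n ^ 'm \<Rightarrow> real ^ 'm \<Rightarrow> nat \<Rightarrow> real \<Rightarrow> real ^ 'n \<Rightarrow> real" where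
  "wn_loss A b L r u = loss A b L ((r / norm u) *\<^sub>R u)"

text \<open>(r,u) is a weight-normalized gradient flow on [0,\<infinity>) with step sizes eta_r, eta_u
  and initial data r0, u0. The gradients are the partial gradients of Ltilde
  (defined via Frechet derivatives), derivatives at t = 0 are one-sided.\<close>
definition wn_gradient_flow ::
  "real ^ 'n ^ 'm \<Rightarrow> real ^ 'm \<Rightarrow> nat \<Rightarrow> real \<Rightarrow> real \<Rightarrow> real \<Rightarrow> real ^ 'n
    \<Rightarrow> (real \<Rightarrow> real) \<Rightarrow> (real \<Rightarrow> real ^ 'n) \<Rightarrow> bool" where
  "wn_gradient_flow A b L eta_r eta_u r0 u0 r u \<longleftrightarrow>
     r 0 = r0 \<and> u 0 = u0 \<and>
     (\<forall>t\<ge>0. u t \<noteq> 0 \<and>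
        (\<exists>gr gu.
           ((\<lambda>s. wn_loss A b L s (u t)) has_real_derivative gr) (at (r t)) \<and>
           ((\<lambda>v. wn_loss A b L (r t) v) has_derivative (\<lambda>k. gu \<bullet> k)) (at (u t)) \<and>
           (r has_real_derivative (- eta_r * gr)) (at t within {0..}) \<and>
           (u has_vector_derivative (- eta_u *\<^sub>R gu)) (at t within {0..})))"

end

theory Submission
  imports Defs
begin


definition gradf :: "real ^ 'n ^ 'm \<Rightarrow> real ^ 'm \<Rightarrow> nat \<Rightarrow> real ^ 'n \<Rightarrow> real ^ 'n" where
  "gradf A b L x = (\<chi> i. (x $ i) ^ (L - 1) * (transpose A *v (A *v epow x L - b)) $ i)"

lemma loss_coord:
  "loss A b L x = (1 / (2 * real L)) * (\<Sum>j\<in>UNIV. ((\<Sum>i\<in>UNIV. A$j$i * (x$i)^L) - b$j)^2)"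
  unfolding loss_def power2_norm_eq_inner inner_vec_def
  by (simp add: matrix_vector_mult_def epow_def power2_eq_square)

lemma loss_deriv:
  assumes "L \<ge> 1"
  shows "(loss A b L has_derivative (\<lambda>k. gradf A b L x \<bullet> k)) (at x)"
proof -
  have e: "loss A b L = (\<lambda>x. (1 / (2 * real L)) * (\<Sum>j\<in>UNIV. ((\<Sum>i\<in>UNIV. A$j$i * (x$i)^L) - b$j)^2))"
    using loss_coord by blast
  have "((\<lambda>x. (1 / (2 * real L)) * (\<Sum>j\<in>UNIV. ((\<Sum>i\<in>UNIV. A$j$i * (x$i)^L) - b$j)^2)) has_derivative
     (\<lambda>k. (1 / (2 * real L)) * (\<Sum>j\<in>UNIV. 2 * ((\<Sum>i\<in>UNIV. A$j$i * (x$i)^L) - b$j) *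
          (\<Sum>i\<in>UNIV. A$j$i * (real L * (x$i)^(L-1) * k$i))))) (at x)"
    apply (rule derivative_eq_intros bounded_linear_imp_has_derivative bounded_linear_vec_nth refl | simp)+
    apply (simp add: fun_eq_iff mult_ac left_diff_distrib right_diff_distrib)
    done
  also have "(\<lambda>k. (1 / (2 * real L)) * (\<Sum>j\<in>UNIV. 2 * ((\<Sum>i\<in>UNIV. A$j$i * (x$i)^L) - b$j) *
          (\<Sum>i\<in>UNIV. A$j$i * (real L * (x$i)^(L-1) * k$i)))) = (\<lambda>k. gradf A b L x \<bullet> k)"
  proof
    fix k
    have "(1 / (2 * real L)) * (\<Sum>j\<in>UNIV. 2 * ((\<Sum>i\<in>UNIV. A$j$i * (x$i)^L) - b$j) *
          (\<Sum>i\<in>UNIV. A$j$i * (real L * (x$i)^(L-1) * k$i)))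
      = (\<Sum>j\<in>UNIV. \<Sum>i\<in>UNIV. ((\<Sum>i\<in>UNIV. A$j$i * (x$i)^L) - b$j) * (A$j$i * ((x$i)^(L-1) * k$i)))"
      unfolding sum_distrib_left[of "1 / (2 * real L)"]
    proof (rule sum.cong[OF refl])
      fix j
      define X where "X = (\<Sum>i\<in>UNIV. A$j$i * (x$i)^L) - b$j"
      have h: "(\<Sum>i\<in>UNIV. A$j$i * (real L * (x$i)^(L-1) * k$i)) = real L * (\<Sum>i\<in>UNIV. A$j$i*((x$i)^(L-1)*k$i))"
        by (simp add: sum_distrib_left mult_ac)
      have "(1 / (2 * real L)) * (2 * X * (real L * (\<Sum>i\<in>UNIV. A$j$i*((x$i)^(L-1)*k$i))))
         = X * (\<Sum>i\<in>UNIV. A$j$i*((x$i)^(L-1)*k$i))" using assms by (simp add: field_simps)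
      then show "(1 / (2 * real L)) * (2 * ((\<Sum>i\<in>UNIV. A$j$i * (x$i)^L) - b$j) *
          (\<Sum>i\<in>UNIV. A$j$i * (real L * (x$i)^(L-1) * k$i)))
        = (\<Sum>i\<in>UNIV. ((\<Sum>i\<in>UNIV. A$j$i * (x$i)^L) - b$j) * (A$j$i * ((x$i)^(L-1) * k$i)))"
        unfolding h X_def[symmetric] by (simp add: sum_distrib_left)
    qed
    also have "\<dots> = (\<Sum>i\<in>UNIV. \<Sum>j\<in>UNIV. ((\<Sum>i\<in>UNIV. A$j$i * (x$i)^L) - b$j) * (A$j$i * ((x$i)^(L-1) * k$i)))"
      by (rule sum.swap)
    also have "\<dots> = gradf A b L x \<bullet> k"
      unfolding gradf_def inner_vec_def
      by (simp add: matrix_vector_mult_def epow_def transpose_def sum_distrib_left sum_distrib_right algebra_simps)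
    finally show "(1 / (2 * real L)) * (\<Sum>j\<in>UNIV. 2 * ((\<Sum>i\<in>UNIV. A$j$i * (x$i)^L) - b$j) *
          (\<Sum>i\<in>UNIV. A$j$i * (real L * (x$i)^(L-1) * k$i))) = gradf A b L x \<bullet> k" .
  qed
  finally show ?thesis unfolding e .
qed
lemma gr_eq:
  assumes "L \<ge> 1" "u \<noteq> 0"
    and d: "((\<lambda>s. wn_loss A b L s u) has_real_derivative gr) (at r)"
  shows "gr = gradf A b L ((r / norm u) *\<^sub>R u) \<bullet> sgn u"
proof -
  let ?g = "gradf A b L ((r / norm u) *\<^sub>R u)"
  have e1: "(\<lambda>s. (s / norm u) *\<^sub>R u) = (\<lambda>s. s *\<^sub>R sgn u)"
    by (simp add: fun_eq_iff sgn_div_norm divide_inverse)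
  have "((\<lambda>s. s *\<^sub>R sgn u) has_derivative (\<lambda>h. h *\<^sub>R sgn u)) (at r)"
    by (rule bounded_linear_imp_has_derivative[OF bounded_linear_scaleR_left])
  hence "((\<lambda>s. (s / norm u) *\<^sub>R u) has_derivative (\<lambda>h. (h / norm u) *\<^sub>R u)) (at r)"
    unfolding e1 by (simp add: sgn_div_norm divide_inverse)
  from has_derivative_compose[OF this loss_deriv[OF assms(1)]]
  have "((\<lambda>s. wn_loss A b L s u) has_derivative (\<lambda>h. ?g \<bullet> ((h / norm u) *\<^sub>R u))) (at r)"
    unfolding wn_loss_def .
  moreover have "(\<lambda>h. ?g \<bullet> ((h / norm u) *\<^sub>R u)) = (*) (?g \<bullet> sgn u)"
    by (auto simp: sgn_div_norm fun_eq_iff field_simps)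
  ultimately have "((\<lambda>s. wn_loss A b L s u) has_real_derivative (?g \<bullet> sgn u)) (at r)"
    by (simp add: has_field_derivative_def)
  with d show ?thesis by (rule DERIV_unique)
qed

lemma gu_eq:
  assumes "L \<ge> 1" "u \<noteq> 0"
    and d: "((\<lambda>v. wn_loss A b L r v) has_derivative (\<lambda>k. gu \<bullet> k)) (at u)"
  shows "gu = (r / norm u) *\<^sub>R (gradf A b L ((r / norm u) *\<^sub>R u)
               - (gradf A b L ((r / norm u) *\<^sub>R u) \<bullet> sgn u) *\<^sub>R sgn u)"
proof -
  let ?g = "gradf A b L ((r / norm u) *\<^sub>R u)"
  let ?w = "(r / norm u) *\<^sub>R (?g - (?g \<bullet> sgn u) *\<^sub>R sgn u)"
  have "((\<lambda>v. (r / norm v) *\<^sub>R v) has_derivative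
      (\<lambda>k. (r / norm u) *\<^sub>R k - ((r * (k \<bullet> sgn u)) / (norm u)^2) *\<^sub>R u)) (at u)"
  apply (rule has_derivative_eq_rhs)
  apply (rule has_derivative_scaleR has_derivative_divide' has_derivative_const has_derivative_norm[OF assms(2)] has_derivative_ident)+
  using assms(2) apply simp
  apply (rule has_derivative_ident)
  apply (auto simp: fun_eq_iff power2_eq_square)
  done
  from has_derivative_compose[OF this loss_deriv[OF assms(1)]]
  have "((\<lambda>v. wn_loss A b L r v) has_derivative
    (\<lambda>k. ?g \<bullet> ((r / norm u) *\<^sub>R k - ((r * (k \<bullet> sgn u)) / (norm u)^2) *\<^sub>R u))) (at u)"
    unfolding wn_loss_def .
  moreover have "(\<lambda>k. ?g \<bullet> ((r / norm u) *\<^sub>R k - ((r * (k \<bullet> sgn u)) / (norm u)^2) *\<^sub>R u))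
     = (\<lambda>k. ?w \<bullet> k)"
  proof
    fix k
    have n: "norm u \<noteq> 0" using assms(2) by simp
    show "?g \<bullet> ((r / norm u) *\<^sub>R k - ((r * (k \<bullet> sgn u)) / (norm u)^2) *\<^sub>R u) = ?w \<bullet> k"
      unfolding sgn_div_norm using n
      apply (simp add: inner_diff_left inner_diff_right inner_commute power2_eq_square divide_simps)
      by (simp add: right_diff_distrib mult.assoc mult.left_commute)
  qed
  ultimately have "((\<lambda>v. wn_loss A b L r v) has_derivative (\<lambda>k. ?w \<bullet> k)) (at u)" by simp
  from has_derivative_unique[OF d this] have "\<And>k. gu \<bullet> k = ?w \<bullet> k" by metis
  hence "(gu - ?w) \<bullet> (gu - ?w) = 0" by (simp add: inner_diff_left)
  thus ?thesis by simp
qed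


lemma range_subspace: "subspace (range ((*v) (A :: real^'n^'m)))"
  by (rule linear_subspace_image[OF matrix_vector_mul_linear subspace_UNIV])

lemma range_decomp:
  fixes A :: "real^'n^'m" and b :: "real^'m"
  obtains p z where "p \<in> range ((*v) A)" "b = p + z" "z v* A = 0"
proof -
  obtain y z where y: "y \<in> span (range ((*v) A))" and z: "\<And>w. w \<in> span (range ((*v) A)) \<Longrightarrow> orthogonal z w"
     and e: "b = y + z"
    using orthogonal_subspace_decomp_exists by blast
  have sp: "span (range ((*v) A)) = range ((*v) A)" using range_subspace by simp
  have "(z v* A) \<bullet> (z v* A) = 0"
  proof -
    have "orthogonal z (A *v (z v* A))" using z sp by auto
    thus ?thesis by (simp add: orthogonal_def dot_lmul_matrix)
  qed
  hence "z v* A = 0" by simp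
  with y e sp show ?thesis using that by auto
qed

lemma PL_const:
  fixes A :: "real^'n^'m"
  obtains \<sigma> where "\<sigma> > 0" "\<And>y. y \<in> range ((*v) A) \<Longrightarrow> \<sigma> * norm y \<le> norm (y v* A)"
proof -
  have "\<exists>e>0. \<forall>y\<in>range ((*v) A). norm ((\<lambda>y. transpose A *v y) y) \<ge> e * norm y"
  proof (rule injective_imp_isometric)
    show "closed (range ((*v) A))" by (rule closed_subspace[OF range_subspace])
    show "subspace (range ((*v) A))" by (rule range_subspace)
    show "bounded_linear (\<lambda>y. transpose A *v y)" by (rule matrix_vector_mul_bounded_linear)
    show "\<forall>x\<in>range ((*v) A). transpose A *v x = 0 \<longrightarrow> x = 0"
    proof (clarify)
      fix w assume h: "transpose A *v (A *v w) = 0"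
      have "(A *v w) \<bullet> (A *v w) = ((A *v w) v* A) \<bullet> w" by (simp add: dot_lmul_matrix)
      also have "\<dots> = 0" using h by simp
      finally show "A *v w = 0" by simp
    qed
  qed
  thus ?thesis using that by auto
qed


definition Gfun :: "nat \<Rightarrow> real \<Rightarrow> real \<Rightarrow> real" where
  "Gfun L \<gamma> r = (if L = 1 then \<gamma> * (r - arctan r) else \<gamma> * (r^2 - ln (1 + r^2)) / 2)"

lemma G_deriv:
  assumes "L \<in> {1,2}"
  shows "(Gfun L \<gamma> has_real_derivative (\<gamma> * r^(L+1) / (1 + r^2))) (at r)"
proof (cases "L = 1")
  case True
  have p: "1 + r^2 > 0" by (simp add: add_pos_nonneg)
  have "((\<lambda>r. \<gamma> * (r - arctan r)) has_real_derivative \<gamma> * (1 - inverse (1 + r^2))) (at r)"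
    by (rule derivative_eq_intros refl | simp)+
  moreover have "\<gamma> * (1 - inverse (1 + r^2)) = \<gamma> * r^(L+1) / (1 + r^2)"
    using True p by (simp add: field_simps power2_eq_square)
  ultimately show ?thesis using True unfolding Gfun_def by simp
next
  case False
  then have L: "L = 2" using assms by auto
  have p: "1 + r^2 > 0" by (simp add: add_pos_nonneg)
  have "((\<lambda>r. \<gamma> * (r^2 - ln (1 + r^2)) / 2) has_real_derivative
      \<gamma> * (2 * r - (2 * r) / (1 + r^2)) / 2) (at r)"
    apply (rule derivative_eq_intros refl | use p in simp)+
    done
  moreover have "\<gamma> * (2 * r - (2 * r) / (1 + r^2)) / 2 = \<gamma> * r^(L+1) / (1 + r^2)"
    using L p by (simp add: field_simps power2_eq_square power3_eq_cube)
  ultimately show ?thesis using L unfolding Gfun_def by simp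
qed

lemma G_bound:
  assumes "L \<in> {1,2}" "\<gamma> > 0" "Gfun L \<gamma> r \<le> B"
  shows "r \<le> B / \<gamma> + 3 + 4 * \<bar>B\<bar> / \<gamma>"
proof (cases "L = 1")
  case True
  have "r - arctan r \<le> B / \<gamma>" using assms True unfolding Gfun_def by (simp add: field_simps mult.commute)
  moreover have "arctan r < pi / 2" by (rule arctan_ubound)
  moreover have "pi / 2 < 3" using pi_less_4 by simp
  moreover have "0 \<le> 4 * \<bar>B\<bar> / \<gamma>" using assms(2) by simp
  ultimately show ?thesis by linarith
next
  case False
  then have L: "L = 2" using assms by auto
  have h: "r^2 - ln (1 + r^2) \<le> 2 * B / \<gamma>" using assms L unfolding Gfun_def by (simp add: field_simps mult.commute)
  have "ln (1 + r^2) \<le> r^2 / 2 + 1"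
  proof -
    have p: "1 + r^2 > 0" by (simp add: add_pos_nonneg)
    have "ln (1 + r^2) = ln 2 + ln ((1 + r^2) / 2)" using p by (simp add: ln_div)
    also have "ln ((1 + r^2) / 2) \<le> (1 + r^2) / 2 - 1" by (rule ln_le_minus_one) (simp add: add_pos_nonneg)
    also have "ln (2::real) \<le> 1" using ln_le_minus_one[of 2] by simp
    finally show ?thesis by (simp add: field_simps)
  qed
  moreover have "4 * B / \<gamma> = 2 * (2 * B / \<gamma>)" by simp
  ultimately have "r^2 \<le> 4 * B / \<gamma> + 2" using h by linarith
  moreover have "r \<le> 1 + r^2"
  proof -
    have "0 \<le> (r - 1/2)^2" by simp
    thus ?thesis by (simp add: power2_eq_square algebra_simps)
  qed
  moreover have "B / \<gamma> + 4 * \<bar>B\<bar> / \<gamma> \<ge> 4 * B / \<gamma>"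
  proof -
    have "4 * B / \<gamma> \<le> (B + 4 * \<bar>B\<bar>) / \<gamma>" by (rule divide_right_mono) (use assms(2) in auto)
    thus ?thesis by (simp add: add_divide_distrib)
  qed
  ultimately show ?thesis by linarith
qed


lemma key_ineq:
  fixes eta \<beta> \<sigma> \<delta> c r aa G E Q :: real and L :: nat
  assumes eta: "eta > 0" and b: "\<beta> \<ge> 0" and s: "\<sigma> > 0" and d: "\<delta> > 0" and c: "c > 0" and L: "L \<ge> 1"
    and aG: "\<bar>aa\<bar> \<le> G" and E: "E > 0"
    and Q: "Q \<ge> \<beta> * (r^2 / (1 + r^2)) * G^2"
    and PL: "(\<sigma> * (\<bar>r\<bar> * \<delta> / c)^(L-1))^2 * E \<le> G^2"
  shows "(\<beta> * \<sigma> * (\<delta> / c)^(L-1) / eta) * r^(L+1) / (1 + r^2) * (- eta * aa)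
       + inverse (sqrt E) / 2 * (- 2 * real L * Q) \<le> 0"
proof -
  define M where "M = \<sigma> * (\<bar>r\<bar> * \<delta> / c)^(L-1)"
  define w where "w = r^2 / (1 + r^2)"
  define sE where "sE = sqrt E"
  have G0: "G \<ge> 0" using aG by linarith
  have M0: "M \<ge> 0" unfolding M_def using s d c by simp
  have w0: "w \<ge> 0" unfolding w_def by (simp add: add_pos_nonneg)
  have sE0: "sE > 0" unfolding sE_def using E by simp
  have MsE: "M * sE \<le> G"
  proof -
    have "(M * sE)^2 \<le> G^2" unfolding sE_def M_def using E PL by (simp add: power_mult_distrib)
    thus ?thesis using G0 by (rule power2_le_imp_le)
  qed
  have pw: "\<bar>r^(L+1)\<bar> = \<bar>r\<bar>^(L-1) * r^2"
  proof -
    have "L + 1 = (L - 1) + 2" using L by simp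
    hence "r^(L+1) = r^(L-1) * r^2" by (metis power_add)
    thus ?thesis by (simp add: abs_mult power_abs)
  qed
  have T1: "(\<beta> * \<sigma> * (\<delta> / c)^(L-1) / eta) * r^(L+1) / (1 + r^2) * (- eta * aa) \<le> \<beta> * w * M * G"
  proof -
    have "(\<beta> * \<sigma> * (\<delta> / c)^(L-1) / eta) * r^(L+1) / (1 + r^2) * (- eta * aa)
        \<le> \<bar>(\<beta> * \<sigma> * (\<delta> / c)^(L-1) / eta) * r^(L+1) / (1 + r^2) * (- eta * aa)\<bar>" by simp
    also have "\<dots> = \<beta> * \<sigma> * (\<delta> / c)^(L-1) * \<bar>r^(L+1)\<bar> / (1 + r^2) * \<bar>aa\<bar>"
      using eta b s d c by (simp add: abs_mult add_pos_nonneg)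
    also have "\<dots> = \<beta> * w * M * \<bar>aa\<bar>"
      unfolding pw M_def w_def by (simp add: power_mult_distrib power_divide mult_ac)
    also have "\<dots> \<le> \<beta> * w * M * G"
      using aG b w0 M0 by (simp add: mult_left_mono)
    finally show ?thesis .
  qed
  have T2: "inverse (sqrt E) / 2 * (- 2 * real L * Q) \<le> - (\<beta> * w * G^2) / sE"
  proof -
    have Qn: "Q \<ge> \<beta> * w * G^2" using Q unfolding w_def by simp
    have "\<beta> * w * G^2 \<ge> 0" using b w0 by simp
    hence "real L * Q \<ge> \<beta> * w * G^2" using Qn L
      by (smt (verit) mult_le_cancel_right1 of_nat_1 of_nat_mono)
    hence "- (real L * Q) / sE \<le> - (\<beta> * w * G^2) / sE" using sE0 by (simp add: divide_right_mono)
    moreover have "inverse (sqrt E) / 2 * (- 2 * real L * Q) = - (real L * Q) / sE"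
      unfolding sE_def by (simp add: field_simps)
    ultimately show ?thesis by simp
  qed
  have "\<beta> * w * M * G \<le> (\<beta> * w * G^2) / sE"
  proof -
    have "\<beta> * w * G * (M * sE) \<le> \<beta> * w * G * G"
      using MsE b w0 G0 by (simp add: mult_left_mono)
    hence "(\<beta> * w * M * G) * sE \<le> \<beta> * w * G^2" by (simp add: power2_eq_square mult_ac)
    thus ?thesis using sE0 by (simp add: pos_le_divide_eq)
  qed
  with T1 T2 show ?thesis by linarith
qed
lemma Q_low:
  fixes eta c r A2 N :: real
  assumes "eta > 0" "c > 0" "0 \<le> A2" "A2 \<le> N"
  shows "eta * A2 + (r / c)^2 * (N - A2) \<ge> min eta (1 / c^2) * (r^2 / (1 + r^2)) * N"
proof -
  define m where "m = min eta ((r / c)^2)"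
  define w where "w = r^2 / (1 + r^2)"
  have w0: "0 \<le> w" "w \<le> 1" "w \<le> r^2" unfolding w_def
    by (auto simp: add_pos_nonneg divide_le_eq_1 divide_le_eq mult_le_cancel_left1)
  have "min eta (1 / c^2) * w \<le> m"
  proof -
    have "min eta (1 / c^2) * w \<le> eta * 1" using w0 assms(1) by (intro mult_mono) auto
    moreover have "min eta (1 / c^2) * w \<le> (1 / c^2) * r^2" using w0 assms(2) by (intro mult_mono) auto
    ultimately show ?thesis unfolding m_def by (simp add: power_divide)
  qed
  hence "min eta (1 / c^2) * w * N \<le> m * N" using assms by (intro mult_right_mono) auto
  also have "m * N = m * A2 + m * (N - A2)" by (simp add: algebra_simps)
  also have "\<dots> \<le> eta * A2 + (r / c)^2 * (N - A2)"
    using assms unfolding m_def by (intro add_mono mult_right_mono) auto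
  finally show ?thesis unfolding w_def .
qed


lemma at_pos: "(s::real) > 0 \<Longrightarrow> at s within {0..} = at s"
  by (rule at_within_interior) simp

lemma vd_compose:
  assumes f: "(f has_derivative (\<lambda>k. g \<bullet> k)) (at (x t))"
    and x: "(x has_vector_derivative x') (at t within S)"
  shows "((\<lambda>s. f (x s)) has_real_derivative (g \<bullet> x')) (at t within S)"
proof -
  from has_derivative_compose[OF x[unfolded has_vector_derivative_def] f]
  have "((\<lambda>s. f (x s)) has_derivative (\<lambda>h. g \<bullet> (h *\<^sub>R x'))) (at t within S)" .
  moreover have "(\<lambda>h. g \<bullet> (h *\<^sub>R x')) = (*) (g \<bullet> x')" by (auto simp: fun_eq_iff)
  ultimately show ?thesis by (simp add: has_field_derivative_def)
qed

lemma const_ab: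
  fixes f :: "real \<Rightarrow> real"
  assumes "0 \<le> a" "a \<le> b" and d: "\<And>s. s \<in> {a..b} \<Longrightarrow> (f has_real_derivative 0) (at s within {0..})"
  shows "f b = f a"
proof -
  have c: "continuous_on {a..b} f"
  proof (rule DERIV_continuous_on[of _ _ "\<lambda>_. 0"])
    fix s assume s: "s \<in> {a..b}"
    have "{a..b} \<subseteq> {0..}" using assms(1) by auto
    with d[OF s] show "(f has_real_derivative 0) (at s within {a..b})" by (rule DERIV_subset)
  qed
  have d': "\<And>s. a < s \<Longrightarrow> s < b \<Longrightarrow> (f has_real_derivative 0) (at s)"
    using d assms(1) at_pos by (metis atLeastAtMost_iff less_eq_real_def order_le_less_trans)
  have "f a \<le> f b" by (rule DERIV_nonneg_imp_increasing_open[OF assms(2) _ c]) (use d' in auto)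
  moreover have "f b \<le> f a" by (rule DERIV_nonpos_imp_decreasing_open[OF assms(2) _ c]) (use d' in auto)
  ultimately show ?thesis by simp
qed

lemma dec_ab:
  fixes f :: "real \<Rightarrow> real"
  assumes "0 \<le> a" "a \<le> b" and c: "continuous_on {a..b} f"
    and d: "\<And>s. a < s \<Longrightarrow> s < b \<Longrightarrow> (f has_real_derivative f' s) (at s within {0..})"
    and n: "\<And>s. a < s \<Longrightarrow> s < b \<Longrightarrow> f' s \<le> 0"
  shows "f b \<le> f a"
proof (rule DERIV_nonpos_imp_decreasing_open[OF assms(2) _ c])
  fix s assume "a < s" "s < b"
  then show "\<exists>y. (f has_real_derivative y) (at s) \<and> y \<le> 0"
    using d n assms(1) at_pos by (metis order_le_less_trans)
qed


theorem mainTheorem14: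
  fixes A :: "real ^ 'n ^ 'm" and b :: "real ^ 'm" and L :: nat
    and eta :: real and r0 :: real and u0 :: "real ^ 'n"
    and r :: "real \<Rightarrow> real" and u :: "real \<Rightarrow> real ^ 'n"
  assumes "L \<in> {1, 2}"
    and "eta > 0"
    and "r0 > 0"
    and "\<forall>i. u0 $ i > 0"
    and "wn_gradient_flow A b L eta 1 r0 u0 r u"
    and "\<exists>\<delta>>0. \<forall>t\<ge>0. \<forall>i. \<bar>u t $ i\<bar> \<ge> \<delta>"
  shows "\<exists>C. \<forall>t\<ge>0. r t \<le> C"
proof -
  note L12 = assms(1)
  have L1: "L \<ge> 1" using L12 by auto
  have eta: "eta > 0" by (rule assms(2))
  obtain \<delta> where dpos: "\<delta> > 0" and dlow: "\<And>t i. t \<ge> 0 \<Longrightarrow> \<bar>u t $ i\<bar> \<ge> \<delta>" using assms(6) by auto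
  have r00: "r 0 = r0" and u00: "u 0 = u0" and fl: "\<forall>t\<ge>0. u t \<noteq> 0 \<and>
        (\<exists>gr gu.
           ((\<lambda>s. wn_loss A b L s (u t)) has_real_derivative gr) (at (r t)) \<and>
           ((\<lambda>v. wn_loss A b L (r t) v) has_derivative (\<lambda>k. gu \<bullet> k)) (at (u t)) \<and>
           (r has_real_derivative (- eta * gr)) (at t within {0..}) \<and>
           (u has_vector_derivative (- 1 *\<^sub>R gu)) (at t within {0..}))"
    using assms(5) unfolding wn_gradient_flow_def by auto
  define gf where "gf t = gradf A b L ((r t / norm (u t)) *\<^sub>R u t)" for t
  have unz: "\<And>t. t \<ge> 0 \<Longrightarrow> u t \<noteq> 0" using fl by auto
  have Dr0: "(r has_real_derivative (- eta * (gf t \<bullet> sgn (u t)))) (at t within {0..})"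
   and Du0: "(u has_vector_derivative (- ((r t / norm (u t)) *\<^sub>R (gf t - (gf t \<bullet> sgn (u t)) *\<^sub>R sgn (u t))))) (at t within {0..})"
    if t: "t \<ge> 0" for t
  proof -
    obtain gr gu where h1: "((\<lambda>s. wn_loss A b L s (u t)) has_real_derivative gr) (at (r t))"
      and h2: "((\<lambda>v. wn_loss A b L (r t) v) has_derivative (\<lambda>k. gu \<bullet> k)) (at (u t))"
      and h3: "(r has_real_derivative (- eta * gr)) (at t within {0..})"
      and h4: "(u has_vector_derivative (- 1 *\<^sub>R gu)) (at t within {0..})"
      using fl t by blast
    have "gr = gf t \<bullet> sgn (u t)" unfolding gf_def by (rule gr_eq[OF L1 unz[OF t] h1])
    with h3 show "(r has_real_derivative (- eta * (gf t \<bullet> sgn (u t)))) (at t within {0..})" by simp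
    have "gu = (r t / norm (u t)) *\<^sub>R (gf t - (gf t \<bullet> sgn (u t)) *\<^sub>R sgn (u t))"
      unfolding gf_def by (rule gu_eq[OF L1 unz[OF t] h2])
    with h4 show "(u has_vector_derivative (- ((r t / norm (u t)) *\<^sub>R (gf t - (gf t \<bullet> sgn (u t)) *\<^sub>R sgn (u t))))) (at t within {0..})"
      by simp
  qed
  \<comment> \<open>norm of u is constant\<close>
  define c where "c = norm u0"
  have u0nz: "u0 \<noteq> 0" using unz[of 0] u00 by simp
  have cpos: "c > 0" using u0nz c_def by simp
  have nu: "norm (u t) = c" if t: "t \<ge> 0" for t
  proof -
    have "(norm (u t))^2 = (norm (u 0))^2"
    proof (rule const_ab[where f="\<lambda>s. (norm (u s))^2", of 0 t])
      fix s :: real assume s: "s \<in> {0..t}"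
      hence s0: "s \<ge> 0" by simp
      have sq: "((\<lambda>v. (norm v)^2) has_derivative (\<lambda>k. (2 *\<^sub>R u s) \<bullet> k)) (at (u s))"
        using has_derivative_sqnorm_at[of "u s"] by simp
      have "((\<lambda>s. (norm (u s))^2) has_real_derivative
         ((2 *\<^sub>R u s) \<bullet> (- ((r s / norm (u s)) *\<^sub>R (gf s - (gf s \<bullet> sgn (u s)) *\<^sub>R sgn (u s)))))) (at s within {0..})"
        by (rule vd_compose[OF sq Du0[OF s0]])
      moreover have "(2 *\<^sub>R u s) \<bullet> (- ((r s / norm (u s)) *\<^sub>R (gf s - (gf s \<bullet> sgn (u s)) *\<^sub>R sgn (u s)))) = 0"
        using unz[OF s0] by (simp add: sgn_div_norm inner_diff_right inner_commute dot_square_norm power2_eq_square field_simps)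
      ultimately show "((\<lambda>s. (norm (u s))^2) has_real_derivative 0) (at s within {0..})" by metis
    qed (use t in auto)
    then show ?thesis using u00 c_def by (simp add: power2_eq_iff_nonneg)
  qed
  have sgn_u: "sgn (u t) = (1 / c) *\<^sub>R u t" if "t \<ge> 0" for t
    using nu[OF that] by (simp add: sgn_div_norm divide_inverse_commute)
  have nsgn: "norm (sgn (u t)) = 1" if "t \<ge> 0" for t
    using unz[OF that] by (simp add: norm_sgn)
  define x where "x t = (r t / c) *\<^sub>R u t" for t
  have gfx: "gf t = gradf A b L (x t)" if "t \<ge> 0" for t
    unfolding gf_def x_def nu[OF that] ..
  obtain p z where pr: "p \<in> range ((*v) A)" and bpz: "b = p + z" and zA: "z v* A = 0"
    by (rule range_decomp)
  obtain \<sigma> where spos: "\<sigma> > 0" and sig: "\<And>y. y \<in> range ((*v) A) \<Longrightarrow> \<sigma> * norm y \<le> norm (y v* A)"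
    using PL_const[of A] by blast
  have gradp: "gradf A p L y = gradf A b L y" for y
  proof -
    have "transpose A *v (A *v epow y L - b) = transpose A *v (A *v epow y L - p)"
      using zA unfolding bpz by (simp add: matrix_vector_mult_diff_distrib matrix_vector_right_distrib
          del: transpose_matrix_vector) (simp add: algebra_simps)
    thus ?thesis unfolding gradf_def by simp
  qed
  define e where "e t = A *v epow (x t) L - p" for t
  define E where "E t = (norm (e t))^2" for t
  have lossE: "E t = 2 * real L * loss A p L (x t)" for t
    using L1 unfolding E_def e_def loss_def by simp
  define a where "a t = gf t \<bullet> sgn (u t)" for t
  define Q where "Q t = eta * (a t)^2 + (r t / c)^2 * ((norm (gf t))^2 - (a t)^2)" for t
  have Dr: "(r has_real_derivative (- eta * a t)) (at t within {0..})" if "t \<ge> 0" for t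
    using Dr0[OF that] unfolding a_def .
  have Dx: "(x has_vector_derivative
      ((r t / c) *\<^sub>R (- ((r t / c) *\<^sub>R (gf t - a t *\<^sub>R sgn (u t)))) + (- eta * a t / c) *\<^sub>R u t))
      (at t within {0..})" if t: "t \<ge> 0" for t
  proof -
    have "((\<lambda>s. r s / c) has_real_derivative (- eta * a t / c)) (at t within {0..})"
      by (rule DERIV_cdivide[OF Dr[OF t]])
    from has_vector_derivative_scaleR[OF this Du0[OF t]]
    show ?thesis unfolding x_def a_def nu[OF t] .
  qed
  have DE: "(E has_real_derivative (- 2 * real L * Q t)) (at t within {0..})" if t: "t \<ge> 0" for t
  proof -
    have ld: "(loss A p L has_derivative (\<lambda>k. gf t \<bullet> k)) (at (x t))"
      using loss_deriv[OF L1, of A p "x t"] unfolding gradp gfx[OF t] .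
    have "((\<lambda>s. loss A p L (x s)) has_real_derivative (gf t \<bullet>
      ((r t / c) *\<^sub>R (- ((r t / c) *\<^sub>R (gf t - a t *\<^sub>R sgn (u t)))) + (- eta * a t / c) *\<^sub>R u t)))
      (at t within {0..})"
      by (rule vd_compose[OF ld Dx[OF t]])
    moreover have "gf t \<bullet> ((r t / c) *\<^sub>R (- ((r t / c) *\<^sub>R (gf t - a t *\<^sub>R sgn (u t)))) + (- eta * a t / c) *\<^sub>R u t)
       = - Q t"
    proof -
      have ut: "u t = c *\<^sub>R sgn (u t)" using sgn_u[OF t] cpos by simp
      have "gf t \<bullet> ((r t / c) *\<^sub>R (- ((r t / c) *\<^sub>R (gf t - a t *\<^sub>R sgn (u t)))) + (- eta * a t / c) *\<^sub>R u t)
        = gf t \<bullet> ((r t / c) *\<^sub>R (- ((r t / c) *\<^sub>R (gf t - a t *\<^sub>R sgn (u t)))) + (- eta * a t / c) *\<^sub>R (c *\<^sub>R sgn (u t)))"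
        using ut by metis
      also have "\<dots> = - ((r t / c)^2 * (gf t \<bullet> gf t - a t * a t) + eta * a t * a t)"
        using cpos unfolding a_def
        by (simp add: inner_add_right inner_diff_right power2_eq_square field_simps)
      also have "\<dots> = - Q t" unfolding Q_def power2_norm_eq_inner by (simp add: power2_eq_square)
      finally show ?thesis .
    qed
    ultimately have "((\<lambda>s. loss A p L (x s)) has_real_derivative - Q t) (at t within {0..})" by metis
    from DERIV_cmult[OF this, of "2 * real L"]
    show ?thesis unfolding lossE by simp
  qed
  have aG: "\<bar>a t\<bar> \<le> norm (gf t)" if t: "t \<ge> 0" for t
    using Cauchy_Schwarz_ineq2[of "gf t" "sgn (u t)"] nsgn[OF t] unfolding a_def by simp
  define \<beta> where "\<beta> = min eta (1 / c^2)"
  have bpos: "\<beta> > 0" unfolding \<beta>_def using eta cpos by simp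
  have Qlow: "Q t \<ge> \<beta> * ((r t)^2 / (1 + (r t)^2)) * (norm (gf t))^2" if t: "t \<ge> 0" for t
  proof -
    have "(a t)^2 \<le> (norm (gf t))^2" using aG[OF t] by (metis abs_le_square_iff abs_norm_cancel)
    from Q_low[OF eta cpos _ this, of "r t"] show ?thesis unfolding Q_def \<beta>_def by simp
  qed
  have Qnn: "Q t \<ge> 0" if t: "t \<ge> 0" for t
    by (rule order_trans[OF _ Qlow[OF t]]) (use bpos in \<open>simp add: add_pos_nonneg\<close>)
  have PLg: "(\<sigma> * (\<bar>r t\<bar> * \<delta> / c)^(L-1))^2 * E t \<le> (norm (gf t))^2" if t: "t \<ge> 0" for t
  proof -
    define M where "M = (\<bar>r t\<bar> * \<delta> / c)^(L-1)"
    obtain w where pw: "p = A *v w" using pr by auto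
    have er: "e t \<in> range ((*v) A)"
      unfolding e_def pw by (metis matrix_vector_mult_diff_distrib rangeI)
    have gfe: "gf t = (\<chi> i. (x t $ i)^(L-1) * (e t v* A) $ i)"
    proof -
      have "gf t = gradf A p L (x t)" using gfx[OF t] gradp by simp
      thus ?thesis unfolding gradf_def e_def by simp
    qed
    have M0: "M \<ge> 0" unfolding M_def using dpos cpos by simp
    have xi: "M^2 \<le> ((x t $ i)^(L-1))^2" for i
    proof -
      have "\<bar>r t\<bar> * \<delta> / c \<le> \<bar>x t $ i\<bar>"
      proof -
        have "\<bar>x t $ i\<bar> = \<bar>r t\<bar> / c * \<bar>u t $ i\<bar>" unfolding x_def using cpos by (simp add: abs_mult)
        moreover have "\<bar>r t\<bar> / c * \<delta> \<le> \<bar>r t\<bar> / c * \<bar>u t $ i\<bar>"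
          using dlow[OF t] cpos by (intro mult_left_mono) auto
        ultimately show ?thesis by simp
      qed
      hence "M \<le> \<bar>x t $ i\<bar>^(L-1)" unfolding M_def using dpos cpos by (intro power_mono) auto
      hence "M^2 \<le> (\<bar>x t $ i\<bar>^(L-1))^2" using M0 by (intro power_mono) auto
      thus ?thesis by (simp add: power_abs[symmetric])
    qed
    have nsq: "(norm y)^2 = (\<Sum>i\<in>UNIV. (y $ i)^2)" for y :: "real^'n"
      unfolding power2_norm_eq_inner inner_vec_def by (simp add: power2_eq_square)
    have "M^2 * (norm (e t v* A))^2 \<le> (norm (gf t))^2"
      unfolding nsq sum_distrib_left gfe
      by (rule sum_mono) (use xi in \<open>auto simp: power_mult_distrib intro: mult_right_mono\<close>)
    moreover have "(\<sigma> * norm (e t))^2 \<le> (norm (e t v* A))^2"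
      using sig[OF er] spos by (intro power_mono) auto
    hence "M^2 * (\<sigma> * norm (e t))^2 \<le> M^2 * (norm (e t v* A))^2" by (intro mult_left_mono) auto
    ultimately show ?thesis unfolding E_def M_def[symmetric] by (simp add: power_mult_distrib mult_ac)
  qed
  \<comment> \<open>Properties of E\<close>
  have E0: "E t \<ge> 0" for t unfolding E_def by simp
  have Econt: "continuous_on {0..} E"
    by (rule DERIV_continuous_on[of _ _ "\<lambda>t. - 2 * real L * Q t"]) (use DE in auto)
  have rcont: "continuous_on {0..} r"
    by (rule DERIV_continuous_on[of _ _ "\<lambda>t. - eta * a t"]) (use Dr in auto)
  have Emono: "E t \<le> E s" if "0 \<le> s" "s \<le> t" for s t
  proof (rule dec_ab[OF that])
    show "continuous_on {s..t} E" by (rule continuous_on_subset[OF Econt]) (use that in auto)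
    fix y assume "s < y" "y < t"
    hence y: "y \<ge> 0" using that by auto
    show "(E has_real_derivative (- 2 * real L * Q y)) (at y within {0..})" by (rule DE[OF y])
    show "- 2 * real L * Q y \<le> 0" using Qnn[OF y] by simp
  qed
  have Ezero: "a t = 0" if t: "t \<ge> 0" and E: "E t = 0" for t
  proof -
    have "e t = 0" using E unfolding E_def by simp
    have "gf t = gradf A p L (x t)" using gfx[OF t] gradp by simp
    also have "\<dots> = 0"
    proof -
      have h: "A *v epow (x t) L - p = 0" using \<open>e t = 0\<close> unfolding e_def .
      show ?thesis by (simp only: gradf_def h) (simp add: vec_eq_iff)
    qed
    finally show ?thesis unfolding a_def by simp
  qed
  \<comment> \<open>Lyapunov function\<close>
  define \<gamma> where "\<gamma> = \<beta> * \<sigma> * (\<delta> / c)^(L-1) / eta"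
  have gpos: "\<gamma> > 0" unfolding \<gamma>_def using bpos spos dpos cpos eta by simp
  define \<Phi> where "\<Phi> s = Gfun L \<gamma> (r s) + sqrt (E s)" for s
  have Gcont: "continuous_on UNIV (Gfun L \<gamma>)"
    by (rule DERIV_continuous_on[of _ _ "\<lambda>r. \<gamma> * r^(L+1) / (1 + r^2)"]) (use G_deriv[OF L12] in auto)
  have Phicont: "continuous_on {a'..b'} \<Phi>" if "0 \<le> a'" for a' b'
  proof -
    have "continuous_on {0..} \<Phi>"
      unfolding \<Phi>_def
      by (intro continuous_intros continuous_on_compose2[OF Gcont rcont] Econt) auto
    thus ?thesis by (rule continuous_on_subset) (use that in auto)
  qed
  have Phidec: "\<Phi> b' \<le> \<Phi> a'" if ab: "0 \<le> a'" "a' \<le> b'" and pos: "\<And>s. a' < s \<Longrightarrow> s < b' \<Longrightarrow> E s > 0" for a' b'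
  proof (rule dec_ab[OF ab Phicont[OF ab(1)]])
    fix s assume s: "a' < s" "s < b'"
    have s0: "s > 0" using s ab by simp
    have Es: "E s > 0" by (rule pos[OF s])
    have drs: "(r has_real_derivative (- eta * a s)) (at s)" using Dr[of s] s0 at_pos[OF s0] by simp
    have dEs: "(E has_real_derivative (- 2 * real L * Q s)) (at s)" using DE[of s] s0 at_pos[OF s0] by simp
    have "(\<Phi> has_real_derivative (\<gamma> * (r s)^(L+1) / (1 + (r s)^2) * (- eta * a s)
         + inverse (sqrt (E s)) / 2 * (- 2 * real L * Q s))) (at s)"
      unfolding \<Phi>_def
      by (intro DERIV_add DERIV_chain2[OF G_deriv[OF L12] drs] DERIV_chain2[OF DERIV_real_sqrt[OF Es] dEs])
    thus "(\<Phi> has_real_derivative (\<gamma> * (r s)^(L+1) / (1 + (r s)^2) * (- eta * a s)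
         + inverse (sqrt (E s)) / 2 * (- 2 * real L * Q s))) (at s within {0..})"
      using at_pos[OF s0] by simp
    show "\<gamma> * (r s)^(L+1) / (1 + (r s)^2) * (- eta * a s)
         + inverse (sqrt (E s)) / 2 * (- 2 * real L * Q s) \<le> 0"
      unfolding \<gamma>_def
      by (rule key_ineq[OF eta less_imp_le[OF bpos] spos dpos cpos L1 aG Es Qlow PLg]) (use s0 in auto)
  qed
  define B where "B = \<Phi> 0"
  have GB: "Gfun L \<gamma> (r t) \<le> B" if t: "t \<ge> 0" for t
  proof -
    define Z where "Z = {s \<in> {0..t}. E s = 0}"
    show ?thesis
    proof (cases "Z = {}")
      case True
      have "\<Phi> t \<le> \<Phi> 0"
      proof (rule Phidec)
        fix s assume "0 < s" "s < t"
        hence "s \<notin> Z" using True by auto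
        thus "E s > 0" using E0[of s] \<open>0 < s\<close> \<open>s < t\<close> unfolding Z_def by force
      qed (use t in auto)
      thus ?thesis unfolding B_def \<Phi>_def using real_sqrt_ge_zero[OF E0[of t]] by linarith
    next
      case False
      define s0 where "s0 = Inf Z"
      have Zc: "closed Z" unfolding Z_def
        by (rule continuous_closed_preimage_constant) (use Econt in \<open>auto intro: continuous_on_subset\<close>)
      have bdd: "bdd_below Z" unfolding Z_def by (rule bdd_belowI[of _ 0]) auto
      have s0Z: "s0 \<in> Z" unfolding s0_def by (rule closed_contains_Inf[OF False bdd Zc])
      hence s0r: "0 \<le> s0" "s0 \<le> t" "E s0 = 0" unfolding Z_def by auto
      have "\<Phi> s0 \<le> \<Phi> 0"
      proof (rule Phidec)
        fix s assume s: "0 < s" "s < s0"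
        have "s \<notin> Z"
        proof
          assume "s \<in> Z"
          hence "s0 \<le> s" unfolding s0_def using bdd by (rule cInf_lower)
          with s show False by simp
        qed
        thus "E s > 0" using E0[of s] s s0r unfolding Z_def by force
      qed (use s0r in auto)
      moreover have "r t = r s0"
      proof (rule const_ab[OF s0r(1) s0r(2)])
        fix s assume s: "s \<in> {s0..t}"
        have "E s \<le> E s0" using Emono[of s0 s] s s0r by auto
        hence "E s = 0" using E0[of s] s0r by simp
        hence "a s = 0" using Ezero[of s] s s0r by auto
        thus "(r has_real_derivative 0) (at s within {0..})" using Dr[of s] s s0r by auto
      qed
      ultimately show ?thesis unfolding B_def \<Phi>_def using s0r(3) by simp
    qed
  qed
  show ?thesis
    using G_bound[OF L12 gpos GB] by blast
qed
end
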